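(* Let $k\ge 1$, $l_0,l_1,\dots,l_k$ and $m_1,\dots,m_k$ be non-negative integers with $l_0>0$, $l_i\ge m_i$ for all $1\le i\le k$, and $l'>m'>0$, where $l'=\sum_{i=1}^k l_i$ and $m'=\sum_{i=1}^k m_i$. For a meromorphic function $f$ put $$P[f]=f^{l_0}(f^{l_1})^{(m_1)}(f^{l_2})^{(m_2)}\cdots (f^{l_k})^{(m_k)}.$$ Let $\omega\not\equiv 0$ be a polynomial of degree $m<l_0$, and let $f$ be a non-constant rational function whose poles, if any, all have multiplicity at least $l_0$. Then $P[f]-\omega$ has at least two distinct zeros in $\mathbb{C}$. *)

theory Defs
  imports "HOL-Analysis.Analysis" "HOL-Computational_Algebra.Polynomial"
begin

definition ratfun :: "complex poly \<Rightarrow> complex poly \<Rightarrow> complex \<Rightarrow> complex" where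
  "ratfun p q = (\<lambda>z. poly p z / poly q z)"

definition Pdiff :: "nat \<Rightarrow> (nat \<Rightarrow> nat) \<Rightarrow> (nat \<Rightarrow> nat) \<Rightarrow> (complex \<Rightarrow> complex) \<Rightarrow> complex \<Rightarrow> complex" where
  "Pdiff k l m f z = f z ^ l 0 * (\<Prod>i=1..k. (deriv ^^ m i) (\<lambda>w. f w ^ l i) z)"

end

theory Submission
  imports Defs "HOL-Computational_Algebra.Fundamental_Theorem_Algebra"
begin


definition Dq :: "complex poly \<Rightarrow> nat \<Rightarrow> complex poly \<Rightarrow> complex poly" where
  "Dq q s A = pderiv A * q - smult (of_nat s) (A * pderiv q)"

fun Dit :: "complex poly \<Rightarrow> complex poly \<Rightarrow> nat \<Rightarrow> nat \<Rightarrow> complex poly" where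
  "Dit q A s 0 = A"
| "Dit q A s (Suc j) = Dq q (s + j) (Dit q A s j)"

lemma Dq_0 [simp]: "Dq q s 0 = 0"
  by (simp add: Dq_def)

lemma Dit_0 [simp]: "Dit q 0 s j = 0"
  by (induction j) auto

lemma Dq_diff: "Dq q s (A - B) = Dq q s A - Dq q s B"
  by (simp add: Dq_def pderiv_diff algebra_simps smult_diff_right)

lemma Dit_diff: "Dit q (A - B) s j = Dit q A s j - Dit q B s j"
  by (induction j) (auto simp: Dq_diff)

lemma Dq_smult: "Dq q s (smult c A) = smult c (Dq q s A)"
  by (simp add: Dq_def pderiv_smult algebra_simps smult_diff_right)

lemma Dit_Suc_left: "Dit q A s (Suc j) = Dit q (Dq q s A) (Suc s) j"
  by (induction j) auto

lemma Dq_mult_qpow: "Dq q m (B * q ^ m) = pderiv B * q ^ Suc m"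
proof (cases m)
  case 0 then show ?thesis by (simp add: Dq_def)
next
  case (Suc m')
  have d: "pderiv (q ^ Suc m') = smult (of_nat (Suc m')) (q ^ m' * pderiv q)"
    by (simp only: pderiv_power_Suc mult_smult_left)
  have "Dq q m (B * q ^ m) = (B * smult (of_nat (Suc m')) (q ^ m' * pderiv q) + q ^ Suc m' * pderiv B) * q
      - smult (of_nat (Suc m')) (B * q ^ Suc m' * pderiv q)"
    unfolding Dq_def Suc pderiv_mult d by simp
  also have "\<dots> = pderiv B * q ^ Suc m"
    unfolding Suc by (simp add: distrib_right distrib_left mult_smult_left mult_smult_right mult.commute mult.left_commute)
  finally show ?thesis .
qed

lemma Dit_mult_qpow: "Dit q (B * q ^ s) s j = (pderiv ^^ j) B * q ^ (s + j)"
proof (induction j)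
  case 0 then show ?case by simp
next
  case (Suc j)
  have "Dit q (B * q ^ s) s (Suc j) = Dq q (s + j) ((pderiv ^^ j) B * q ^ (s + j))"
    using Suc by simp
  also have "\<dots> = pderiv ((pderiv ^^ j) B) * q ^ Suc (s + j)" by (rule Dq_mult_qpow)
  finally show ?case by simp
qed

lemma pderiv_funpow_small: "degree (B::complex poly) < j \<Longrightarrow> (pderiv ^^ j) B = 0"
proof (induction j arbitrary: B)
  case 0 then show ?case by simp
next
  case (Suc j)
  have "(pderiv ^^ Suc j) B = (pderiv ^^ j) (pderiv B)" by (simp only: funpow.simps comp_def funpow_swap1)
  also have "\<dots> = 0"
  proof (cases "degree B = 0")
    case True
    then have "pderiv B = 0" using pderiv_eq_0_iff by blast
    moreover have "(pderiv ^^ j) 0 = 0" by (induction j) simp_all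
    ultimately show ?thesis by simp
  next
    case False
    have "degree (pderiv B) < j" using False Suc.prems by (simp add: degree_pderiv)
    then show ?thesis by (rule Suc.IH)
  qed
  finally show ?case .
qed

lemma pow_dvd_pderiv: "(p::complex poly) ^ k dvd A \<Longrightarrow> p ^ (k - 1) dvd pderiv A"
proof -
  assume "p ^ k dvd A"
  then obtain B where B: "A = p ^ k * B" by (auto elim: dvdE)
  show ?thesis
  proof (cases k)
    case 0 then show ?thesis by simp
  next
    case (Suc k')
    have "pderiv A = p ^ Suc k' * pderiv B + B * (smult (of_nat k) (p ^ k') * pderiv p)"
      unfolding B Suc by (simp only: pderiv_mult pderiv_power_Suc)
    also have "\<dots> = p ^ k' * (p * pderiv B + smult (of_nat k) (B * pderiv p))"
      by (simp add: distrib_left mult_smult_left mult_smult_right mult.commute mult.left_commute)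
    finally show ?thesis using Suc by simp
  qed
qed

lemma pow_dvd_Dq: "p ^ k dvd A \<Longrightarrow> p ^ (k - 1) dvd Dq q s A"
proof -
  assume h: "p ^ k dvd A"
  have "p ^ (k - 1) dvd p ^ k" by (rule le_imp_power_dvd) simp
  then have "p ^ (k - 1) dvd A" using h by (rule dvd_trans)
  then have "p ^ (k - 1) dvd smult (of_nat s) (A * pderiv q)"
    by (simp add: dvd_smult)
  moreover have "p ^ (k - 1) dvd pderiv A * q" using pow_dvd_pderiv[OF h] by simp
  ultimately show ?thesis unfolding Dq_def by (rule dvd_diff[rotated])
qed

lemma pow_dvd_Dit: "p ^ k dvd A \<Longrightarrow> p ^ (k - j) dvd Dit q A s j"
proof (induction j)
  case 0 then show ?case by simp
next
  case (Suc j)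
  have "p ^ (k - j - 1) dvd Dit q A s (Suc j)" using pow_dvd_Dq[OF Suc.IH[OF Suc.prems]] by simp
  moreover have "k - j - 1 = k - Suc j" by simp
  ultimately show ?case by simp
qed

lemma Dq_power: "Dq q l (p ^ l) = smult (of_nat l) (p ^ (l - 1) * Dq q 1 p)"
proof (cases l)
  case 0 then show ?thesis by (simp add: Dq_def)
next
  case (Suc l')
  have "Dq q l (p ^ l) = smult (of_nat (Suc l')) (p ^ l') * pderiv p * q
     - smult (of_nat (Suc l')) (p ^ Suc l' * pderiv q)"
    unfolding Dq_def Suc by (simp only: pderiv_power_Suc)
  also have "\<dots> = smult (of_nat l) (p ^ (l - 1) * Dq q 1 p)"
    unfolding Dq_def Suc by (simp add: smult_diff_right right_diff_distrib mult_smult_left mult_smult_right mult.commute mult.left_commute)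
  finally show ?thesis .
qed


lemma coeff_pderiv_mult_top:
  fixes A q :: "complex poly"
  assumes "degree A + degree q \<ge> 1"
  shows "coeff (pderiv A * q) (degree A + degree q - 1) = of_nat (degree A) * lead_coeff A * lead_coeff q"
proof (cases "degree A = 0")
  case True
  then have "pderiv A = 0" by (rule iffD2[OF pderiv_eq_0_iff])
  then show ?thesis using True by simp
next
  case False
  have e: "degree A + degree q - 1 = degree (pderiv A) + degree q"
    using False by (simp add: degree_pderiv)
  have "coeff (pderiv A) (degree (pderiv A)) = of_nat (degree A) * lead_coeff A"
    using False by (simp add: degree_pderiv coeff_pderiv)
  then show ?thesis unfolding e coeff_mult_degree_sum by simp
qed

lemma degree_pderiv_mult_le:
  fixes A q :: "complex poly"
  shows "degree (pderiv A * q) \<le> degree A + degree q - 1"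
proof (cases "degree A = 0")
  case True
  then have "pderiv A = 0" by (rule iffD2[OF pderiv_eq_0_iff])
  then show ?thesis by simp
next
  case False
  have "degree (pderiv A * q) \<le> degree (pderiv A) + degree q" by (rule degree_mult_le)
  then show ?thesis using False by (simp add: degree_pderiv)
qed

lemma Dq_top:
  fixes A q :: "complex poly"
  assumes "degree A + degree q \<ge> 1"
  shows "coeff (Dq q s A) (degree A + degree q - 1) =
           (of_nat (degree A) - of_nat s * of_nat (degree q)) * lead_coeff A * lead_coeff q"
proof -
  have 1: "coeff (pderiv A * q) (degree A + degree q - 1) = of_nat (degree A) * lead_coeff A * lead_coeff q"
    using assms by (rule coeff_pderiv_mult_top)
  have 2: "coeff (pderiv q * A) (degree q + degree A - 1) = of_nat (degree q) * lead_coeff q * lead_coeff A"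
    using assms by (intro coeff_pderiv_mult_top) simp
  have "coeff (Dq q s A) (degree A + degree q - 1) =
        coeff (pderiv A * q) (degree A + degree q - 1) - of_nat s * coeff (pderiv q * A) (degree q + degree A - 1)"
    unfolding Dq_def by (simp add: mult.commute add.commute)
  also have "\<dots> = (of_nat (degree A) - of_nat s * of_nat (degree q)) * lead_coeff A * lead_coeff q"
    unfolding 1 2 by (simp add: algebra_simps)
  finally show ?thesis .
qed

lemma Dq_degree_le:
  fixes A q :: "complex poly"
  shows "degree (Dq q s A) \<le> degree A + degree q - 1"
proof -
  have "degree (pderiv A * q) \<le> degree A + degree q - 1" by (rule degree_pderiv_mult_le)
  moreover have "degree (smult (of_nat s) (A * pderiv q)) \<le> degree A + degree q - 1"
    using degree_pderiv_mult_le[of q A] by (simp add: mult.commute add.commute le_trans[OF degree_smult_le])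
  ultimately show ?thesis unfolding Dq_def by (rule degree_diff_le)
qed

lemma Dq_nonzero_sum:
  fixes A q :: "complex poly"
  assumes "Dq q s A \<noteq> 0"
  shows "degree A + degree q \<ge> 1"
proof (rule ccontr)
  assume "\<not> ?thesis"
  then have "degree A = 0" "degree q = 0" by auto
  then have "pderiv A = 0" "pderiv q = 0" by (auto intro: iffD2[OF pderiv_eq_0_iff])
  then show False using assms by (simp add: Dq_def)
qed

lemma Dq_degree_nz:
  fixes A q :: "complex poly"
  assumes "Dq q s A \<noteq> 0"
  shows "degree (Dq q s A) + 1 \<le> degree A + degree q"
  using Dq_degree_le[of q s A] Dq_nonzero_sum[OF assms] by linarith

lemma Dq_exact:
  fixes A q :: "complex poly"
  assumes "A \<noteq> 0" "q \<noteq> 0" "int (degree A) \<noteq> int s * int (degree q)"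
  shows "Dq q s A \<noteq> 0 \<and> degree (Dq q s A) + 1 = degree A + degree q"
proof -
  have ge: "degree A + degree q \<ge> 1" using assms(3) by (cases "degree A") auto
  have "(of_nat (degree A) :: complex) \<noteq> of_nat (s * degree q)"
    using assms(3) by (metis of_nat_eq_iff of_nat_mult)
  then have "(of_nat (degree A) - of_nat s * of_nat (degree q) :: complex) \<noteq> 0" by simp
  then have c: "coeff (Dq q s A) (degree A + degree q - 1) \<noteq> 0"
    unfolding Dq_top[OF ge] using assms(1,2) by simp
  then have nz: "Dq q s A \<noteq> 0" by auto
  have "degree A + degree q - 1 \<le> degree (Dq q s A)" using c by (rule le_degree)
  with Dq_degree_le[of q s A] ge nz show ?thesis by linarith
qed

lemma Dit_degree_nz:
  assumes "Dit q A s j \<noteq> 0"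
  shows "degree (Dit q A s j) + j \<le> degree A + j * degree q"
  using assms
proof (induction j)
  case 0 then show ?case by simp
next
  case (Suc j)
  have nz: "Dq q (s + j) (Dit q A s j) \<noteq> 0" using Suc.prems by simp
  then have "Dit q A s j \<noteq> 0" by auto
  then have ih: "degree (Dit q A s j) + j \<le> degree A + j * degree q" by (rule Suc.IH)
  have "degree (Dq q (s + j) (Dit q A s j)) + 1 \<le> degree (Dit q A s j) + degree q"
    by (rule Dq_degree_nz[OF nz])
  then show ?case using ih by simp
qed

lemma Dit_exact:
  fixes A q :: "complex poly"
  assumes "A \<noteq> 0" "q \<noteq> 0"
    and "int (degree A) - int s * int (degree q) < 0 \<or> int j \<le> int (degree A) - int s * int (degree q)"
  shows "Dit q A s j \<noteq> 0 \<and>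
         int (degree (Dit q A s j)) - int (s + j) * int (degree q) = int (degree A) - int s * int (degree q) - int j"
  using assms(3)
proof (induction j)
  case 0 then show ?case using assms(1) by simp
next
  case (Suc j)
  define \<delta> where "\<delta> = int (degree A) - int s * int (degree q)"
  have "\<delta> < 0 \<or> int j \<le> \<delta>" using Suc.prems unfolding \<delta>_def by auto
  then have ih: "Dit q A s j \<noteq> 0"
     "int (degree (Dit q A s j)) - int (s + j) * int (degree q) = \<delta> - int j"
    using Suc.IH unfolding \<delta>_def by auto
  have "int (degree (Dit q A s j)) \<noteq> int (s + j) * int (degree q)"
    using ih(2) Suc.prems unfolding \<delta>_def by auto
  from Dq_exact[OF ih(1) assms(2) this]
  have "Dq q (s + j) (Dit q A s j) \<noteq> 0"
       "degree (Dq q (s + j) (Dit q A s j)) + 1 = degree (Dit q A s j) + degree q" by auto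
  then show ?case using ih(2) unfolding \<delta>_def by (simp add: algebra_simps)
qed

lemma Dq_one_self: "Dq q 1 q = 0"
  by (simp add: Dq_def mult.commute)

lemma wronskian_zero:
  fixes p q :: "complex poly"
  assumes "p \<noteq> 0" "q \<noteq> 0" "Dq q 1 p = 0"
  shows "\<exists>c. p = smult c q"
proof -
  have dd: "degree p = degree q"
    using Dq_exact[of p q 1] assms by force
  define c where "c = lead_coeff p / lead_coeff q"
  define r where "r = p - smult c q"
  have "Dq q 1 r = Dq q 1 p - smult c (Dq q 1 q)"
    unfolding r_def Dq_diff Dq_smult ..
  then have D0: "Dq q 1 r = 0" using assms(3) Dq_one_self[of q] by simp
  have lc: "coeff r (degree q) = 0"
    unfolding r_def c_def using assms(2) dd by simp
  have "degree r \<le> degree q" unfolding r_def using dd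
    by (metis degree_diff_le degree_smult_le le_refl)
  show ?thesis
  proof (cases "r = 0")
    case True then show ?thesis unfolding r_def by auto
  next
    case False
    have "degree r \<noteq> degree q"
      using lc False by (metis leading_coeff_0_iff)
    then have "int (degree r) \<noteq> int 1 * int (degree q)" by simp
    from Dq_exact[OF False assms(2) this] D0 show ?thesis by simp
  qed
qed



lemma no_roots_unit:
  fixes p :: "complex poly"
  assumes "\<And>x. poly p x \<noteq> 0"
  shows "p dvd V"
proof -
  have "degree p = 0" using alg_closed_imp_poly_has_root[of p] assms by auto
  then obtain c where c: "p = [:c:]" by (metis degree_eq_zeroE)
  have "c \<noteq> 0" using assms[of 0] c by auto
  then have "is_unit [:c:]" by (simp add: is_unit_const_poly_iff dvd_field_iff)
  then show ?thesis unfolding c by (rule unit_imp_dvd)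
qed

lemma ord_dvd:
  fixes p V :: "complex poly"
  assumes "p \<noteq> 0" "V \<noteq> 0" "\<forall>z. order z p \<le> order z V"
  shows "p dvd V"
  using assms
proof (induction p arbitrary: V rule: poly_root_order_induct)
  case 0 then show ?case by simp
next
  case (no_roots p) then show ?case by (intro no_roots_unit) auto
next
  case (root p x n)
  have p0: "p \<noteq> 0" using root.prems(1) by auto
  have ox: "order x ([:-x, 1:] ^ n * p) = n"
    using p0 root.hyps(2) by (subst order_mult) (auto simp: order_power_n_n order_0I)
  then have "n \<le> order x V" using root.prems(3) by metis
  then have "[:-x, 1:] ^ n dvd V" by (simp add: order_divides)
  then obtain V0 where V0: "V = [:-x, 1:] ^ n * V0" by (auto elim: dvdE)
  have V0nz: "V0 \<noteq> 0" using V0 root.prems(2) by auto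
  have "\<forall>z. order z p \<le> order z V0"
  proof
    fix z
    show "order z p \<le> order z V0"
    proof (cases "z = x")
      case True then show ?thesis using root.hyps(2) by (simp add: order_0I)
    next
      case False
      have o1: "order z ([:-x, 1:] ^ n) = 0" using False by (intro order_0I) auto
      have "order z ([:-x, 1:] ^ n * p) = order z p"
        using p0 by (subst order_mult) (auto simp: o1)
      moreover have "order z V = order z V0"
        unfolding V0 using V0nz by (subst order_mult) (auto simp: o1)
      ultimately show ?thesis using root.prems(3) by metis
    qed
  qed
  then have "p dvd V0" using root.IH p0 V0nz by blast
  then show ?case unfolding V0 by (rule mult_dvd_mono[OF dvd_refl])
qed

definition rad :: "complex set \<Rightarrow> complex poly" where
  "rad T = (\<Prod>z\<in>T. [:-z, 1:])"

lemma rad_nz: "finite T \<Longrightarrow> rad T \<noteq> 0"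
  unfolding rad_def by (auto simp: prod_zero_iff)

lemma rad_root: "finite T \<Longrightarrow> z \<in> T \<Longrightarrow> [:-z, 1:] dvd rad T"
  unfolding rad_def by (rule dvd_prodI) auto

lemma degree_rad: "finite T \<Longrightarrow> degree (rad T) = card T"
  unfolding rad_def by (subst degree_prod_eq_sum_degree) auto

lemma good_poly:
  fixes E :: "complex poly"
  assumes "finite T" "E \<noteq> 0" "\<forall>z. poly E z = 0 \<longrightarrow> z \<in> T"
  shows "E dvd pderiv E * rad T"
proof (cases "pderiv E = 0")
  case True then show ?thesis by simp
next
  case False
  have rnz: "rad T \<noteq> 0" using assms(1) by (rule rad_nz)
  show ?thesis
  proof (rule ord_dvd[OF assms(2)])
    show "pderiv E * rad T \<noteq> 0" using False rnz by simp
    show "\<forall>z. order z E \<le> order z (pderiv E * rad T)"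
    proof
      fix z
      show "order z E \<le> order z (pderiv E * rad T)"
      proof (cases "order z E = 0")
        case True then show ?thesis by simp
      next
        case nz: False
        then have "poly E z = 0" using assms(2) order_root by blast
        then have "z \<in> T" using assms(3) by blast
        then have "[:-z, 1:] ^ 1 dvd rad T" using rad_root[OF assms(1)] by simp
        then have r1: "1 \<le> order z (rad T)" using rnz order_divides[of z 1 "rad T"] by blast
        have "[:-z, 1:] ^ order z E dvd E" by (rule order_1)
        then have "[:-z, 1:] ^ (order z E - 1) dvd pderiv E" by (rule pow_dvd_pderiv)
        then have r2: "order z E - 1 \<le> order z (pderiv E)" using False by (simp add: order_divides)
        have "order z (pderiv E * rad T) = order z (pderiv E) + order z (rad T)"
          using False rnz by (subst order_mult) auto
        then show ?thesis using r1 r2 by linarith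
      qed
    qed
  qed
qed



lemma good_mult_pow:
  fixes E q r :: "complex poly"
  assumes "E dvd pderiv E * r" "q dvd pderiv q * r"
  shows "E * q ^ j dvd pderiv (E * q ^ j) * r"
proof -
  have 1: "E * q ^ j dvd E * pderiv (q ^ j) * r"
  proof (cases j)
    case 0 then show ?thesis by simp
  next
    case (Suc j')
    have "q ^ Suc j' dvd q ^ j' * (pderiv q * r)"
      using assms(2) by (simp add: mult_dvd_mono)
    then have "q ^ j dvd smult (of_nat (Suc j')) (q ^ j') * pderiv q * r"
      unfolding Suc by (simp add: mult.assoc dvd_smult)
    then have "E * q ^ j dvd E * (smult (of_nat (Suc j')) (q ^ j') * pderiv q * r)"
      by (rule mult_dvd_mono[OF dvd_refl])
    then show ?thesis unfolding Suc pderiv_power_Suc by (simp add: mult.assoc)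
  qed
  have 2: "E * q ^ j dvd q ^ j * pderiv E * r"
    using assms(1) by (simp add: mult.assoc mult.commute[of "q ^ j"] mult_dvd_mono)
  have "pderiv (E * q ^ j) * r = E * pderiv (q ^ j) * r + q ^ j * pderiv E * r"
    by (simp add: pderiv_mult distrib_right)
  then show ?thesis using 1 2 by (simp add: dvd_add)
qed

lemma good_mult_any:
  fixes F W r :: "complex poly"
  assumes "F dvd pderiv F * r"
  shows "F dvd pderiv (F * W) * r"
proof -
  have "pderiv (F * W) * r = F * (pderiv W * r) + W * (pderiv F * r)"
    by (simp add: pderiv_mult distrib_right mult.assoc)
  then show ?thesis using assms by (simp add: dvd_add)
qed

lemma chain_dvd:
  fixes E q r :: "complex poly"
  assumes "E dvd pderiv E * r" "q dvd pderiv q * r"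
  shows "E * q ^ j dvd Dit q E s j * r ^ j"
proof (induction j)
  case 0 then show ?case by simp
next
  case (Suc j)
  define Y where "Y = Dit q E s j"
  from Suc.IH obtain W where W: "Y * r ^ j = E * q ^ j * W" unfolding Y_def by (auto elim: dvdE)
  have g: "E * q ^ j dvd pderiv (E * q ^ j) * r" by (rule good_mult_pow[OF assms])
  have a1: "E * q ^ j dvd pderiv (Y * r ^ j) * r"
    unfolding W by (rule good_mult_any[OF g])
  have a2: "E * q ^ j dvd Y * pderiv (r ^ j) * r"
  proof (cases j)
    case 0 then show ?thesis by simp
  next
    case (Suc j')
    have "Y * pderiv (r ^ j) * r = smult (of_nat j) (Y * r ^ j * pderiv r)"
      unfolding Suc pderiv_power_Suc by (simp add: mult.assoc mult.commute mult.left_commute)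
    then show ?thesis using Suc.IH unfolding Y_def by (simp add: dvd_smult)
  qed
  have e1: "pderiv Y * r ^ Suc j = pderiv (Y * r ^ j) * r - Y * pderiv (r ^ j) * r"
    by (simp add: pderiv_mult distrib_right distrib_left mult.commute mult.left_commute)
  have b1: "E * q ^ j dvd pderiv Y * r ^ Suc j"
    unfolding e1 using a1 a2 by (rule dvd_diff)
  have b2: "E * q ^ Suc j dvd q * (pderiv Y * r ^ Suc j)"
    using mult_dvd_mono[OF dvd_refl[of q] b1] by (simp add: mult.commute mult.left_commute)
  have b3: "E * q ^ Suc j dvd (Y * r ^ j) * (pderiv q * r)"
    using mult_dvd_mono[OF Suc.IH[folded Y_def] assms(2)] by (simp add: mult.commute mult.left_commute)
  have "Dit q E s (Suc j) * r ^ Suc j =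
        q * (pderiv Y * r ^ Suc j) - smult (of_nat (s + j)) ((Y * r ^ j) * (pderiv q * r))"
    unfolding Y_def by (simp add: Dq_def left_diff_distrib right_diff_distrib mult_smult_left mult_smult_right mult_ac)
  then show ?case using b2 b3 by (simp add: dvd_diff dvd_smult)
qed



lemma DERIV_ratpow:
  fixes Y q :: "complex poly"
  assumes "poly q z \<noteq> 0"
  shows "((\<lambda>w. poly Y w / poly q w ^ m) has_field_derivative
           poly (Dq q m Y) z / poly q z ^ Suc m) (at z)"
proof -
  have "((\<lambda>w. poly Y w / poly (q ^ m) w) has_field_derivative
         (poly (pderiv Y) z * poly (q ^ m) z - poly Y z * poly (pderiv (q ^ m)) z) /
           (poly (q ^ m) z * poly (q ^ m) z)) (at z)"
    by (rule DERIV_divide[OF poly_DERIV poly_DERIV]) (use assms in \<open>simp add: poly_power\<close>)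
  moreover have "(poly (pderiv Y) z * poly (q ^ m) z - poly Y z * poly (pderiv (q ^ m)) z) /
           (poly (q ^ m) z * poly (q ^ m) z) = poly (Dq q m Y) z / poly q z ^ Suc m"
  proof (cases m)
    case 0 then show ?thesis using assms by (simp add: Dq_def)
  next
    case (Suc m')
    have "poly (pderiv (q ^ m)) z = of_nat m * poly q z ^ m' * poly (pderiv q) z"
      unfolding Suc pderiv_power_Suc by (simp add: poly_power)
    then show ?thesis using assms unfolding Suc
      by (simp add: Dq_def poly_power field_simps)
  qed
  ultimately show ?thesis by (simp add: poly_power)
qed

lemma Dit_deriv:
  fixes A q :: "complex poly"
  assumes "poly q z \<noteq> 0"
  shows "(deriv ^^ j) (\<lambda>w. poly A w / poly q w ^ s) z = poly (Dit q A s j) z / poly q z ^ (s + j)"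
  using assms
proof (induction j arbitrary: z)
  case 0 then show ?case by simp
next
  case (Suc j)
  define g where "g = (\<lambda>w. poly A w / poly q w ^ s)"
  define h where "h = (\<lambda>w. poly (Dit q A s j) w / poly q w ^ (s + j))"
  have op: "open {w. poly q w \<noteq> 0}"
    by (rule open_Collect_neq) (auto intro: continuous_intros)
  have ev: "eventually (\<lambda>w. w \<in> {w. poly q w \<noteq> 0}) (nhds z)"
    using op Suc.prems by (intro eventually_nhds_in_open) auto
  have ev2: "eventually (\<lambda>w. (deriv ^^ j) g w = h w) (nhds z)"
    using ev by eventually_elim (use Suc.IH in \<open>auto simp: g_def h_def\<close>)
  have "(deriv ^^ Suc j) g z = deriv ((deriv ^^ j) g) z" by simp
  also have "\<dots> = deriv h z" by (rule deriv_cong_ev[OF ev2 refl])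
  also have "\<dots> = poly (Dq q (s + j) (Dit q A s j)) z / poly q z ^ Suc (s + j)"
    unfolding h_def by (rule DERIV_imp_deriv[OF DERIV_ratpow[OF Suc.prems]])
  finally show ?case by (simp add: g_def)
qed



lemma order_pow:
  fixes P :: "complex poly"
  assumes "P \<noteq> 0"
  shows "order z (P ^ n) = n * order z P"
proof (induction n)
  case 0 then show ?case by (simp add: order_0I)
next
  case (Suc n)
  have "order z (P * P ^ n) = order z P + order z (P ^ n)"
    using assms by (subst order_mult) auto
  then show ?case using Suc by simp
qed

lemma Pdiff_formula:
  fixes p q :: "complex poly"
  assumes "poly q z \<noteq> 0"
  shows "Pdiff k l m (ratfun p q) z =
     poly (p ^ l 0 * (\<Prod>i\<in>{1..k}. Dit q (p ^ l i) (l i) (m i))) z /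
       poly q z ^ (l 0 + (\<Sum>i\<in>{1..k}. l i + m i))"
proof -
  have f: "\<And>i. (\<lambda>w. ratfun p q w ^ l i) = (\<lambda>w. poly (p ^ l i) w / poly q w ^ l i)"
    by (rule ext) (simp add: ratfun_def power_divide poly_power)
  have "Pdiff k l m (ratfun p q) z =
        (poly p z / poly q z) ^ l 0 *
        (\<Prod>i\<in>{1..k}. poly (Dit q (p ^ l i) (l i) (m i)) z / poly q z ^ (l i + m i))"
    unfolding Pdiff_def f Dit_deriv[OF assms] by (simp only: ratfun_def)
  also have "\<dots> = (poly p z ^ l 0 / poly q z ^ l 0) *
        ((\<Prod>i\<in>{1..k}. poly (Dit q (p ^ l i) (l i) (m i)) z) / poly q z ^ (\<Sum>i\<in>{1..k}. l i + m i))"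
    by (simp add: prod_dividef power_sum power_divide)
  also have "\<dots> = poly (p ^ l 0 * (\<Prod>i\<in>{1..k}. Dit q (p ^ l i) (l i) (m i))) z /
       poly q z ^ (l 0 + (\<Sum>i\<in>{1..k}. l i + m i))"
    by (simp add: poly_prod poly_power power_add)
  finally show ?thesis .
qed


theorem theorem2p2:
  fixes k :: nat and l m :: "nat \<Rightarrow> nat" and \<omega> p q :: "complex poly"
  assumes "k \<ge> 1"
    and "l 0 > 0"
    and "\<forall>i\<in>{1..k}. m i \<le> l i"
    and "(\<Sum>i=1..k. l i) > (\<Sum>i=1..k. m i)"
    and "(\<Sum>i=1..k. m i) > 0"
    and "\<omega> \<noteq> 0" and "degree \<omega> < l 0"
    and "q \<noteq> 0" and "coprime p q"
    and "\<not> (\<exists>c. \<forall>z. poly q z \<noteq> 0 \<longrightarrow> ratfun p q z = c)"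
    and "\<forall>z. poly q z = 0 \<longrightarrow> order z q \<ge> l 0"
  shows "\<exists>z1 z2. z1 \<noteq> z2 \<and> poly q z1 \<noteq> 0 \<and> poly q z2 \<noteq> 0 \<and>
           Pdiff k l m (ratfun p q) z1 = poly \<omega> z1 \<and>
           Pdiff k l m (ratfun p q) z2 = poly \<omega> z2"
proof (rule ccontr)
  assume contra: "\<not> ?thesis"
  define I where "I = {1..k}"
  define L where "L = (\<Sum>i\<in>I. l i)"
  define Mm where "Mm = (\<Sum>i\<in>I. m i)"
  define S where "S = l 0 + (\<Sum>i\<in>I. l i + m i)"
  define X where "X = (\<lambda>i. Dit q (p ^ l i) (l i) (m i))"
  define A0 where "A0 = p ^ l 0 * (\<Prod>i\<in>I. X i)"
  define E where "E = A0 - \<omega> * q ^ S"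
  define P where "P = degree p"
  define D where "D = degree q"
  have finI: "finite I" unfolding I_def by simp
  have LM: "Mm < L" "0 < Mm" using assms(4,5) unfolding L_def Mm_def I_def by auto
  have mlI: "\<forall>i\<in>I. m i \<le> l i" using assms(3) unfolding I_def by auto
  have SLM: "S = l 0 + L + Mm" unfolding S_def L_def Mm_def by (simp add: sum.distrib)
  have qnz: "q \<noteq> 0" by (rule assms(8))
  have l0: "l 0 > 0" by (rule assms(2))
  have PdA: "\<And>z. poly q z \<noteq> 0 \<Longrightarrow> Pdiff k l m (ratfun p q) z = poly A0 z / poly q z ^ S"
    unfolding A0_def X_def S_def I_def by (rule Pdiff_formula)
  have PdE: "\<And>z. poly q z \<noteq> 0 \<Longrightarrow> Pdiff k l m (ratfun p q) z = poly \<omega> z \<longleftrightarrow> poly E z = 0"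
  proof -
    fix z assume h: "poly q z \<noteq> 0"
    then have "poly q z ^ S \<noteq> 0" by simp
    then show "Pdiff k l m (ratfun p q) z = poly \<omega> z \<longleftrightarrow> poly E z = 0"
      unfolding E_def PdA[OF h] by (simp add: poly_power divide_eq_eq)
  qed
  obtain a where a: "\<And>z. poly q z \<noteq> 0 \<Longrightarrow> poly E z = 0 \<Longrightarrow> z = a"
  proof (cases "\<exists>z. poly q z \<noteq> 0 \<and> poly E z = 0")
    case True
    then obtain z0 where z0: "poly q z0 \<noteq> 0" "poly E z0 = 0" by blast
    show ?thesis
    proof (rule that)
      fix z assume "poly q z \<noteq> 0" "poly E z = 0"
      then show "z = z0" using contra z0 PdE by metis
    qed
  next
    case False then show ?thesis using that by blast
  qed
  have pnz: "p \<noteq> 0"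
  proof
    assume "p = 0"
    then have "\<forall>z. poly q z \<noteq> 0 \<longrightarrow> ratfun p q z = 0" by (simp add: ratfun_def)
    then show False using assms(10) by blast
  qed
  have Wnz: "Dq q 1 p \<noteq> 0"
  proof
    assume "Dq q 1 p = 0"
    then obtain c where c: "p = smult c q" using wronskian_zero pnz qnz by blast
    then have "\<forall>z. poly q z \<noteq> 0 \<longrightarrow> ratfun p q z = c" by (simp add: ratfun_def)
    then show False using assms(10) by blast
  qed
  have dpl: "\<And>i. degree (p ^ l i) = l i * P" using pnz by (simp add: degree_power_eq P_def)
  have pl: "\<And>i. p ^ l i \<noteq> 0" using pnz by simp
  have exX: "\<forall>i\<in>I. X i \<noteq> 0 \<and>
      int (degree (X i)) = int (l i + m i) * int D + int (l i) * (int P - int D) - int (m i)" if PD: "P > D"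
  proof
    fix i assume iI: "i \<in> I"
    have "int (l i * P) - int (l i) * int D = int (l i * (P - D))" using PD by (simp add: diff_mult_distrib2 of_nat_diff)
    moreover have "m i \<le> l i * (P - D)"
    proof -
      have "1 \<le> P - D" using PD by simp
      then have "l i * 1 \<le> l i * (P - D)" by (rule mult_le_mono2)
      then have "l i \<le> l i * (P - D)" by simp
      moreover have "m i \<le> l i" using mlI iI by blast
      ultimately show ?thesis by (rule le_trans[rotated])
    qed
    ultimately have "int (m i) \<le> int (degree (p ^ l i)) - int (l i) * int (degree q)"
      unfolding dpl D_def[symmetric] by linarith
    from Dit_exact[OF pl[of i] qnz, of "l i" "m i"] this
    show "X i \<noteq> 0 \<and>
      int (degree (X i)) = int (l i + m i) * int D + int (l i) * (int P - int D) - int (m i)"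
      unfolding X_def D_def[symmetric] dpl by (simp add: algebra_simps)
  qed
  have Xnz: "\<forall>i\<in>I. X i \<noteq> 0"
  proof
    fix i assume iI: "i \<in> I"
    consider "P > D" | "P < D" | "P = D" "m i = 0" | "P = D" "m i > 0" by linarith
    then show "X i \<noteq> 0"
    proof cases
      case 1 then show ?thesis using exX iI by blast
    next
      case 2
      have "int (degree (p ^ l i)) - int (l i) * int (degree q) < 0 \<or>
            int (m i) \<le> int (degree (p ^ l i)) - int (l i) * int (degree q)"
      proof (cases "l i = 0")
        case True then show ?thesis using bspec[OF mlI iI] by simp
      next
        case False
        have "l i * P < l i * D" using False 2 by simp
        then have "int (l i * P) < int (l i * D)" by linarith
        then have "int (l i * P) - int (l i) * int D < 0" by simp
        then show ?thesis unfolding dpl D_def[symmetric] by blast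
      qed
      then show ?thesis using Dit_exact[OF pl[of i] qnz, of "l i" "m i"] unfolding X_def by blast
    next
      case 3 then show ?thesis unfolding X_def using pl by simp
    next
      case 4
      have li: "l i > 0" using 4 mlI iI by force
      define B where "B = Dq q (l i) (p ^ l i)"
      have Bnz: "B \<noteq> 0" unfolding B_def Dq_power using li pnz Wnz by simp
      have "degree B + 1 \<le> degree (p ^ l i) + degree q" unfolding B_def
        by (rule Dq_degree_nz) (use Bnz B_def in simp)
      then have "degree B < D + l i * D" unfolding dpl D_def[symmetric] using 4 by simp
      then have "int (degree B) < int (D + l i * D)" by (simp only: of_nat_less_iff)
      then have "int (degree B) - int (Suc (l i)) * int (degree q) < 0"
        unfolding D_def[symmetric] by (simp add: algebra_simps)
      then have "Dit q B (Suc (l i)) (m i - 1) \<noteq> 0" using Dit_exact[OF Bnz qnz] by blast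
      moreover have "X i = Dit q B (Suc (l i)) (m i - 1)"
        unfolding X_def B_def using 4 Dit_Suc_left[of q "p ^ l i" "l i" "m i - 1"] by simp
      ultimately show ?thesis by simp
    qed
  qed
  have Xdeg: "\<forall>i\<in>I. degree (X i) + m i \<le> l i * P + m i * D"
  proof
    fix i assume "i \<in> I"
    then have "degree (X i) + m i \<le> degree (p ^ l i) + m i * degree q"
      using Dit_degree_nz[of q "p ^ l i" "l i" "m i"] Xnz unfolding X_def by auto
    then show "degree (X i) + m i \<le> l i * P + m i * D" unfolding dpl D_def .
  qed
  have A0nz: "A0 \<noteq> 0" unfolding A0_def using Xnz pnz finI by (auto simp: prod_zero_iff)
  have degA0: "degree A0 = l 0 * P + (\<Sum>i\<in>I. degree (X i))"
    unfolding A0_def P_def using Xnz pnz finI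
    by (simp add: degree_mult_eq prod_zero_iff degree_power_eq degree_prod_eq_sum_degree)
  have D1: "degree A0 + Mm \<le> (l 0 + L) * P + Mm * D"
  proof -
    have "(\<Sum>i\<in>I. degree (X i) + m i) \<le> (\<Sum>i\<in>I. l i * P + m i * D)"
      using Xdeg by (intro sum_mono) auto
    then have "(\<Sum>i\<in>I. degree (X i)) + Mm \<le> L * P + Mm * D"
      unfolding Mm_def L_def by (simp add: sum.distrib sum_distrib_right)
    then show ?thesis unfolding degA0 by (simp add: algebra_simps)
  qed
  define Y where "Y = Dit q A0 S (l 0)"
  have Ynz: "Y \<noteq> 0"
  proof (cases "P > D")
    case True
    have s1: "(\<Sum>i\<in>I. int (degree (X i))) =
       (\<Sum>i\<in>I. int (l i + m i) * int D + int (l i) * (int P - int D) - int (m i))"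
      by (rule sum.cong) (use exX[OF True] in auto)
    have s2: "(\<Sum>i\<in>I. int (degree (X i))) =
       int (\<Sum>i\<in>I. l i + m i) * int D + int L * (int P - int D) - int Mm"
      unfolding s1 L_def Mm_def by (simp add: sum.distrib sum_subtractf sum_distrib_right distrib_right)
    have "int (degree A0) = int (l 0) * int P + (\<Sum>i\<in>I. int (degree (X i)))"
      unfolding degA0 by simp
    then have "int (degree A0) - int S * int D = (int (l 0) + int L) * (int P - int D) - int Mm"
      unfolding s2 S_def by (simp add: algebra_simps)
    moreover have "(int (l 0) + int L) * (int P - int D) \<ge> int (l 0) + int L"
      using True by (simp add: mult_le_cancel_left1)
    ultimately have "int (l 0) \<le> int (degree A0) - int S * int (degree q)"
      using LM unfolding D_def by linarith
    then show ?thesis unfolding Y_def using Dit_exact[OF A0nz qnz] by blast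
  next
    case False
    have "(l 0 + L) * P \<le> (l 0 + L) * D" using False by simp
    then have "degree A0 + Mm \<le> S * D" using D1 SLM by (simp add: algebra_simps)
    then have "int (degree A0 + Mm) \<le> int (S * degree q)" unfolding D_def by (simp only: of_nat_le_iff)
    then have "int (degree A0) - int S * int (degree q) < 0" using LM by simp
    then show ?thesis unfolding Y_def using Dit_exact[OF A0nz qnz] by blast
  qed
  have YE: "Y = Dit q E S (l 0)"
  proof -
    have "Dit q (\<omega> * q ^ S) S (l 0) = (pderiv ^^ l 0) \<omega> * q ^ (S + l 0)" by (rule Dit_mult_qpow)
    also have "\<dots> = 0" using pderiv_funpow_small[OF assms(7)] by simp
    finally show ?thesis unfolding E_def Dit_diff Y_def by simp
  qed
  have Enz: "E \<noteq> 0" using Ynz YE by auto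
  define R where "R = {z. poly q z = 0}"
  define T where "T = insert a R"
  have finR: "finite R" unfolding R_def using qnz by (rule poly_roots_finite)
  have finT: "finite T" unfolding T_def using finR by simp
  have gE: "E dvd pderiv E * rad T"
    by (rule good_poly[OF finT Enz]) (use a in \<open>auto simp: T_def R_def\<close>)
  have gq: "q dvd pderiv q * rad T"
    by (rule good_poly[OF finT qnz]) (auto simp: T_def R_def)
  have "E * q ^ l 0 dvd Y * rad T ^ l 0" unfolding YE by (rule chain_dvd[OF gE gq])
  then obtain V where V: "Y * rad T ^ l 0 = E * q ^ l 0 * V" by (auto elim: dvdE)
  have rnz: "rad T \<noteq> 0" using finT by (rule rad_nz)
  have Vnz: "V \<noteq> 0" using V Ynz rnz by auto
  have degV: "degree Y + l 0 * card T = degree E + l 0 * D + degree V"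
  proof -
    have "degree (Y * rad T ^ l 0) = degree Y + l 0 * card T"
      using Ynz rnz finT by (simp add: degree_mult_eq degree_power_eq degree_rad)
    moreover have "degree (E * q ^ l 0 * V) = degree E + l 0 * D + degree V"
      using Enz qnz Vnz by (simp add: degree_mult_eq degree_power_eq D_def)
    ultimately show ?thesis using V by simp
  qed
  have pA0: "p ^ (l 0 + (L - Mm)) dvd A0"
  proof -
    have "\<forall>i\<in>I. p ^ (l i - m i) dvd X i"
      unfolding X_def using pow_dvd_Dit[of p "l i" "p ^ l i" "m i" for i] by auto
    then have "(\<Prod>i\<in>I. p ^ (l i - m i)) dvd (\<Prod>i\<in>I. X i)" by (intro prod_dvd_prod) auto
    moreover have "(\<Prod>i\<in>I. p ^ (l i - m i)) = p ^ (L - Mm)"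
      unfolding power_sum[symmetric] L_def Mm_def using mlI by (simp add: sum_subtractf_nat)
    ultimately have "p ^ (L - Mm) dvd (\<Prod>i\<in>I. X i)" by simp
    then have "p ^ l 0 * p ^ (L - Mm) dvd A0" unfolding A0_def by (rule mult_dvd_mono[OF dvd_refl])
    then show ?thesis by (simp add: power_add)
  qed
  have pY: "p ^ (L - Mm) dvd Y"
    using pow_dvd_Dit[OF pA0, of "l 0" q S] unfolding Y_def by simp
  have oV: "\<And>z. order z Y + l 0 * order z (rad T) = order z E + l 0 * order z q + order z V"
  proof -
    fix z
    have "order z (Y * rad T ^ l 0) = order z Y + l 0 * order z (rad T)"
      using Ynz rnz by (simp add: order_mult order_pow)
    moreover have "order z (E * q ^ l 0 * V) = order z E + l 0 * order z q + order z V"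
      using Enz qnz Vnz by (simp add: order_mult order_pow)
    ultimately show "order z Y + l 0 * order z (rad T) = order z E + l 0 * order z q + order z V"
      using V by simp
  qed
  have ordT: "\<And>z. z \<in> T \<Longrightarrow> 1 \<le> order z (rad T)"
  proof -
    fix z assume "z \<in> T"
    then have "[:-z, 1:] ^ 1 dvd rad T" using rad_root[OF finT] by simp
    then show "1 \<le> order z (rad T)" using rnz order_divides[of z 1 "rad T"] by blast
  qed
  have pcV: "p ^ (L - Mm) dvd V"
  proof (rule ord_dvd)
    show "p ^ (L - Mm) \<noteq> 0" using pnz by simp
    show "V \<noteq> 0" by (rule Vnz)
    show "\<forall>z. order z (p ^ (L - Mm)) \<le> order z V"
    proof
      fix z
      show "order z (p ^ (L - Mm)) \<le> order z V"
      proof (cases "poly p z = 0")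
        case False
        then have "order z (p ^ (L - Mm)) = 0" by (intro order_0I) (simp add: poly_power)
        then show ?thesis by simp
      next
        case True
        have hq: "poly q z \<noteq> 0" using coprime_poly_0[OF assms(9)] True by blast
        have oq: "order z q = 0" using hq by (rule order_0I)
        have o1: "order z (p ^ (L - Mm)) \<le> order z Y" by (rule dvd_imp_order_le[OF Ynz pY])
        show ?thesis
        proof (cases "z = a")
          case False
          have "poly E z \<noteq> 0" using a[OF hq] False by blast
          then have "order z E = 0" by (rule order_0I)
          then show ?thesis using oV[of z] oq o1 by simp
        next
          case True
          have "order a E < l 0"
          proof (rule ccontr)
            assume "\<not> order a E < l 0"
            then have d1: "[:-a, 1:] ^ l 0 dvd E" by (simp add: order_divides)
            have "[:-a, 1:] dvd p" using \<open>poly p z = 0\<close> True by (simp add: poly_eq_0_iff_dvd)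
            then have "[:-a, 1:] ^ (l 0 + (L - Mm)) dvd p ^ (l 0 + (L - Mm))" by (rule dvd_power_same)
            then have "[:-a, 1:] ^ (l 0 + (L - Mm)) dvd A0" using pA0 by (rule dvd_trans)
            then have d2: "[:-a, 1:] ^ l 0 dvd A0"
              by (rule dvd_trans[rotated]) (simp add: le_imp_power_dvd)
            have "A0 - E = \<omega> * q ^ S" unfolding E_def by simp
            then have d3: "[:-a, 1:] ^ l 0 dvd \<omega> * q ^ S" using dvd_diff[OF d2 d1] by simp
            have "order a (\<omega> * q ^ S) = order a \<omega>"
              using assms(6) qnz oq True by (simp add: order_mult order_pow)
            then have "l 0 \<le> order a \<omega>" using d3 assms(6) qnz by (simp add: order_divides)
            then have "[:-a, 1:] ^ l 0 dvd \<omega>" by (simp add: order_divides)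
            then have "degree ([:-a, 1:] ^ l 0) \<le> degree \<omega>" using assms(6) by (rule dvd_imp_degree_le)
            then show False using assms(7) by (simp add: degree_linear_power)
          qed
          moreover have "1 \<le> order a (rad T)" using ordT by (simp add: T_def)
          then have "l 0 * 1 \<le> l 0 * order a (rad T)" by (rule mult_le_mono2)
          moreover have "l 0 * order a q = 0" "order a (p ^ (L - Mm)) \<le> order a Y" using oq o1 True by simp_all
          moreover have "l 0 * 1 = l 0" by simp
          ultimately show ?thesis using oV[of a] unfolding True by linarith
        qed
      qed
    qed
  qed
  have cPV: "(L - Mm) * P \<le> degree V"
    using dvd_imp_degree_le[OF pcV Vnz] pnz by (simp add: degree_power_eq P_def)
  have l0R: "l 0 * card R \<le> D"
  proof -
    have "(\<Sum>z\<in>R. l 0) \<le> (\<Sum>z\<in>R. order z q)"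
      using assms(11) by (intro sum_mono) (auto simp: R_def)
    also have "\<dots> \<le> D" unfolding R_def D_def by (rule sum_order_le_degree[OF qnz])
    finally show ?thesis by (simp add: mult.commute)
  qed
  have cT: "card T \<le> card R + 1" unfolding T_def using finR by (simp add: card_insert_if)
  have bE: "degree Y + l 0 \<le> degree E + l 0 * D"
    using Dit_degree_nz[of q E S "l 0"] Ynz unfolding YE D_def by simp
  have h1: "l 0 * card T \<le> l 0 * card R + l 0"
  proof -
    have "l 0 * card T \<le> l 0 * (card R + 1)" using cT by (rule mult_le_mono2)
    then show ?thesis by simp
  qed
  have cMP: "(L - Mm) * P + Mm * P = L * P" using LM by (simp add: diff_mult_distrib)
  show False
  proof (cases "P > D")
    case True
    have "1 * P \<le> (L - Mm) * P" using LM by (intro mult_le_mono1) simp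
    then have h2: "P \<le> (L - Mm) * P" by simp
    show False using degV bE h1 l0R cPV True h2 by linarith
  next
    case False
    have f1: "l 0 * P \<le> l 0 * D" using False by simp
    have f2: "Mm * P \<le> Mm * D" using False by simp
    have f6: "L * P \<le> L * D" using False by simp
    have f3': "(Mm + 1) * D \<le> L * D" using LM by (intro mult_le_mono1) simp
    then have f3: "Mm * D + D \<le> L * D" by simp
    have f4: "S * D = l 0 * D + L * D + Mm * D" unfolding SLM by (simp add: algebra_simps)
    have f5: "(l 0 + L) * P = l 0 * P + L * P" by (simp add: algebra_simps)
    have dwq: "degree (\<omega> * q ^ S) = degree \<omega> + S * D"
      using assms(6) qnz by (simp add: degree_mult_eq degree_power_eq D_def)
    have "degree A0 < degree \<omega> + S * D"
      using D1 f1 f2 f3 f4 f5 f6 LM by linarith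
    then have "degree A0 < degree (- (\<omega> * q ^ S))" using dwq by simp
    then have "degree (A0 + - (\<omega> * q ^ S)) = degree (- (\<omega> * q ^ S))" by (rule degree_add_eq_right)
    then have dE: "degree E = degree \<omega> + S * D" unfolding E_def using dwq by simp
    have e: "degree Y + l 0 \<le> degree A0 + l 0 * D"
      using Dit_degree_nz[of q A0 S "l 0"] Ynz unfolding Y_def D_def by simp
    show False using degV e D1 dE cPV h1 l0R f1 f2 f3 f4 f5 cMP LM by linarith
  qed
qed


end
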